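(* Let $y\in V(D^+)$ and let $v_j,v_i$ be two descendants of $y$ in $D^+$ with $d_s(v_j)\le d_s(v_i)$. If $g^*(v_j)\neq\infty$, then $\min_{u\prec y} g(v_i,u)\ge g^*(v_j)$.
   Context: $G=(V,E,w)$ is a simple, connected, undirected graph with positive edge lengths, $s,t\in V$, $d(\cdot,\cdot)$ the shortest path distance in $G$, $d_s(v)=d(s,v)$. $D$ is the union of all shortest $st$-paths of $G$, and $D^+$ is the directed acyclic graph obtained from $D$ by orienting every edge toward $t$. $x\prec y$ means $x$ is an ancestor of $y$ in $D^+$ (a directed path of positive length from $x$ to $y$ exists); a descendant of $y$ is a vertex $v$ with $y\prec v$. For $x\neq s$, $v\neq x$ is an $s$-dominator of $x$ if every directed path from $s$ to $x$ in $D^+$ contains $v$, and $I_s(x)$ is the $s$-dominator of $x$ closest to $x$ (every other $s$-dominator of $x$ is an $s$-dominator of $I_s(x)$). Symmetrically, for $x\neq t$, $v\neq x$ is a $t$-dominator of $x$ if every directed path from $x$ to $t$ in $D^+$ contains $v$, and $I_t(x)$ is the $t$-dominator closest to $x$. For $x\neq s$, $C(x)=\{v: I_s(x)\prec v\prec x\}$. For $x\neq s$ and $y\in V(D^+)$, $g(x,y)=d(y,x)$ if $y\in C(x)$ and $x\prec I_t(y)$, and $g(x,y)=\infty$ otherwise; $g^*(x)=\min_y g(x,y)$. A minimum over the empty set is $\infty$. *)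

theory Defs
  imports Main "HOL-Library.Extended_Real"
begin

definition walk :: "('a \<times> 'a) set \<Rightarrow> 'a list \<Rightarrow> 'a \<Rightarrow> 'a \<Rightarrow> bool" where
  "walk E p u v \<longleftrightarrow> p \<noteq> [] \<and> hd p = u \<and> last p = v \<and>
     (\<forall>i. Suc i < length p \<longrightarrow> (p ! i, p ! Suc i) \<in> E)"

definition walk_len :: "('a \<Rightarrow> 'a \<Rightarrow> real) \<Rightarrow> 'a list \<Rightarrow> real" where
  "walk_len w p = sum_list (map (\<lambda>(a, b). w a b) (zip p (tl p)))"

definition dist_G :: "('a \<times> 'a) set \<Rightarrow> ('a \<Rightarrow> 'a \<Rightarrow> real) \<Rightarrow> 'a \<Rightarrow> 'a \<Rightarrow> real" where
  "dist_G E w u v = Inf (walk_len w ` {p. walk E p u v})"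

definition shortest_st :: "('a \<times> 'a) set \<Rightarrow> ('a \<Rightarrow> 'a \<Rightarrow> real) \<Rightarrow> 'a \<Rightarrow> 'a \<Rightarrow> 'a list \<Rightarrow> bool" where
  "shortest_st E w s t p \<longleftrightarrow> walk E p s t \<and> walk_len w p = dist_G E w s t"

definition Darc :: "('a \<times> 'a) set \<Rightarrow> ('a \<Rightarrow> 'a \<Rightarrow> real) \<Rightarrow> 'a \<Rightarrow> 'a \<Rightarrow> ('a \<times> 'a) set" where
  "Darc E w s t = {(u, v). \<exists>p i. shortest_st E w s t p \<and> Suc i < length p \<and>
                               p ! i = u \<and> p ! Suc i = v}"

definition DV :: "('a \<times> 'a) set \<Rightarrow> ('a \<Rightarrow> 'a \<Rightarrow> real) \<Rightarrow> 'a \<Rightarrow> 'a \<Rightarrow> 'a set" where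
  "DV E w s t = {v. \<exists>p. shortest_st E w s t p \<and> v \<in> set p}"

definition prec :: "('a \<times> 'a) set \<Rightarrow> ('a \<Rightarrow> 'a \<Rightarrow> real) \<Rightarrow> 'a \<Rightarrow> 'a \<Rightarrow> 'a \<Rightarrow> 'a \<Rightarrow> bool" where
  "prec E w s t x y \<longleftrightarrow> (x, y) \<in> (Darc E w s t)\<^sup>+"

definition dpath :: "('a \<times> 'a) set \<Rightarrow> ('a \<Rightarrow> 'a \<Rightarrow> real) \<Rightarrow> 'a \<Rightarrow> 'a \<Rightarrow> 'a list \<Rightarrow> 'a \<Rightarrow> 'a \<Rightarrow> bool" where
  "dpath E w s t p u v \<longleftrightarrow> walk (Darc E w s t) p u v"

definition sdom :: "('a \<times> 'a) set \<Rightarrow> ('a \<Rightarrow> 'a \<Rightarrow> real) \<Rightarrow> 'a \<Rightarrow> 'a \<Rightarrow> 'a \<Rightarrow> 'a \<Rightarrow> bool" where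
  "sdom E w s t v x \<longleftrightarrow> v \<noteq> x \<and> (\<forall>p. dpath E w s t p s x \<longrightarrow> v \<in> set p)"

definition tdom :: "('a \<times> 'a) set \<Rightarrow> ('a \<Rightarrow> 'a \<Rightarrow> real) \<Rightarrow> 'a \<Rightarrow> 'a \<Rightarrow> 'a \<Rightarrow> 'a \<Rightarrow> bool" where
  "tdom E w s t v x \<longleftrightarrow> v \<noteq> x \<and> (\<forall>p. dpath E w s t p x t \<longrightarrow> v \<in> set p)"

definition Is :: "('a \<times> 'a) set \<Rightarrow> ('a \<Rightarrow> 'a \<Rightarrow> real) \<Rightarrow> 'a \<Rightarrow> 'a \<Rightarrow> 'a \<Rightarrow> 'a" where
  "Is E w s t x = (THE v. sdom E w s t v x \<and>
      (\<forall>u. sdom E w s t u x \<and> u \<noteq> v \<longrightarrow> sdom E w s t u v))"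

definition It :: "('a \<times> 'a) set \<Rightarrow> ('a \<Rightarrow> 'a \<Rightarrow> real) \<Rightarrow> 'a \<Rightarrow> 'a \<Rightarrow> 'a \<Rightarrow> 'a" where
  "It E w s t x = (THE v. tdom E w s t v x \<and>
      (\<forall>u. tdom E w s t u x \<and> u \<noteq> v \<longrightarrow> tdom E w s t u v))"

definition Cset :: "('a \<times> 'a) set \<Rightarrow> ('a \<Rightarrow> 'a \<Rightarrow> real) \<Rightarrow> 'a \<Rightarrow> 'a \<Rightarrow> 'a \<Rightarrow> 'a set" where
  "Cset E w s t x = {v. prec E w s t (Is E w s t x) v \<and> prec E w s t v x}"

definition gfun :: "('a \<times> 'a) set \<Rightarrow> ('a \<Rightarrow> 'a \<Rightarrow> real) \<Rightarrow> 'a \<Rightarrow> 'a \<Rightarrow> 'a \<Rightarrow> 'a \<Rightarrow> ereal" where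
  "gfun E w s t x y =
     (if y \<in> Cset E w s t x \<and> prec E w s t x (It E w s t y)
      then ereal (dist_G E w y x) else \<infinity>)"

text \<open>g*(x) = min over y in V(D^+) of g(x,y); empty infimum is \<infinity>\<close>
definition gstar :: "('a \<times> 'a) set \<Rightarrow> ('a \<Rightarrow> 'a \<Rightarrow> real) \<Rightarrow> 'a \<Rightarrow> 'a \<Rightarrow> 'a \<Rightarrow> ereal" where
  "gstar E w s t x = (INF y \<in> DV E w s t. gfun E w s t x y)"

end

theory Submission
  imports Defs
begin


lemma walk_Nil[simp]: "\<not> walk R [] u v" by (simp add: walk_def)
lemma walk_single[simp]: "walk R [a] u v \<longleftrightarrow> u = a \<and> v = a" by (auto simp: walk_def)
lemma walk_Cons2: "walk R (a#b#r) u v \<longleftrightarrow> u = a \<and> (a,b) \<in> R \<and> walk R (b#r) b v"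
proof
  assume H: "walk R (a#b#r) u v"
  have 1: "\<forall>i. Suc i < length (a#b#r) \<longrightarrow> ((a#b#r) ! i, (a#b#r) ! Suc i) \<in> R"
    using H unfolding walk_def by blast
  have "(a,b) \<in> R" using 1[rule_format, of 0] by simp
  moreover have "\<forall>i. Suc i < length (b#r) \<longrightarrow> ((b#r) ! i, (b#r) ! Suc i) \<in> R"
    using 1 by (metis Suc_less_eq length_Cons nth_Cons_Suc)
  moreover have "walk R (b#r) b v" using H calculation(2) unfolding walk_def
    by (metis last_ConsR list.distinct(1) list.sel(1))
  moreover have "u = a" using H by (simp add: walk_def)
  ultimately show "u = a \<and> (a,b) \<in> R \<and> walk R (b#r) b v" by blast
next
  assume H: "u = a \<and> (a,b) \<in> R \<and> walk R (b#r) b v"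
  have "((a#b#r) ! i, (a#b#r) ! Suc i) \<in> R" if "Suc i < length (a#b#r)" for i
  proof (cases i)
    case 0 then show ?thesis using H by simp
  next
    case (Suc j) then show ?thesis using H that unfolding walk_def
      by (metis Suc_less_eq length_Cons nth_Cons_Suc)
  qed
  then show "walk R (a#b#r) u v" using H by (simp add: walk_def)
qed

lemma walk_app: "walk R p a b \<Longrightarrow> walk R q b c \<Longrightarrow> walk R (p @ tl q) a c"
proof (induction p arbitrary: a)
  case Nil then show ?case by simp
next
  case (Cons x p)
  show ?case
  proof (cases p)
    case Nil
    then have "q = b # tl q" using Cons.prems unfolding walk_def by (metis list.collapse walk_single Cons.prems(1))
    then show ?thesis using Cons.prems Nil by (metis append_Cons append_Nil walk_single)
  next
    case (Cons y r)
    then show ?thesis using Cons.prems Cons.IH[of y] by (simp add: walk_Cons2)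
  qed
qed

lemma walk_tl_trancl: "walk R p a b \<Longrightarrow> x \<in> set (tl p) \<Longrightarrow> (a,x) \<in> R\<^sup>+"
proof (induction p arbitrary: a)
  case Nil then show ?case by simp
next
  case (Cons z p)
  show ?case
  proof (cases p)
    case Nil then show ?thesis using Cons by simp
  next
    case (Cons y r)
    then have ay: "(a,y) \<in> R" and wy: "walk R (y#r) y b" "a = z" using Cons.prems by (auto simp: walk_Cons2)
    show ?thesis
    proof (cases "x = y")
      case True then show ?thesis using ay by auto
    next
      case False
      then have "x \<in> set (tl p)" using Cons.prems Cons by simp
      then have "(y,x) \<in> R\<^sup>+" using Cons.IH[of y] wy Cons by simp
      then show ?thesis using ay by (meson trancl_into_trancl2)
    qed
  qed
qed

lemma walk_set_from: "walk R p a b \<Longrightarrow> x \<in> set p \<Longrightarrow> x = a \<or> (a,x) \<in> R\<^sup>+"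
  using walk_tl_trancl[of R p a b x] by (cases p) (auto simp: walk_def)

lemma walk_set_to: "walk R p a b \<Longrightarrow> x \<in> set p \<Longrightarrow> x = b \<or> (x,b) \<in> R\<^sup>+"
proof (induction p arbitrary: a x)
  case Nil then show ?case by simp
next
  case (Cons z p)
  show ?case
  proof (cases p)
    case Nil then show ?thesis using Cons by simp
  next
    case (Cons y r)
    then have ay: "(a,y) \<in> R" and wy: "walk R (y#r) y b" "a = z" using Cons.prems by (auto simp: walk_Cons2)
    have yb: "y = b \<or> (y,b) \<in> R\<^sup>+" using Cons.IH[of y y] wy Cons by simp
    show ?thesis
    proof (cases "x = z")
      case True then show ?thesis using ay yb wy by (meson r_into_trancl' trancl_into_trancl2)
    next
      case False
      then show ?thesis using Cons.IH[of y x] wy Cons Cons.prems by simp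
    qed
  qed
qed

lemma walk_take: "walk R p a b \<Longrightarrow> i < length p \<Longrightarrow> walk R (take (Suc i) p) a (p!i)"
  unfolding walk_def apply (auto simp: hd_take last_conv_nth min_def)
  apply (subgoal_tac "length p - Suc 0 = i") apply simp by linarith

lemma walk_drop: "walk R p a b \<Longrightarrow> i < length p \<Longrightarrow> walk R (drop i p) (p!i) b"
  unfolding walk_def by (auto simp: hd_drop_conv_nth)

lemma take_drop_app: "i < length p \<Longrightarrow> take (Suc i) p @ tl (drop i p) = p"
  by (metis append_take_drop_id drop_Suc tl_drop)

lemma walk_trancl: "(a,b) \<in> R\<^sup>+ \<Longrightarrow> \<exists>p. walk R p a b"
proof (induction rule: trancl_induct)
  case (base y) then show ?case by (auto simp: walk_Cons2 intro!: exI[of _ "[a,y]"])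
next
  case (step y z)
  then obtain p where "walk R p a y" by blast
  moreover have "walk R [y,z] y z" using step by (simp add: walk_Cons2)
  ultimately show ?case using walk_app by fastforce
qed

lemma walk_rev: "walk R p a b \<Longrightarrow> walk (R\<inverse>) (rev p) b a"
proof (induction p arbitrary: a)
  case Nil then show ?case by simp
next
  case (Cons x p)
  show ?case
  proof (cases p)
    case Nil then show ?thesis using Cons by simp
  next
    case (Cons y r)
    then have "walk (R\<inverse>) (rev p) b y" "(x,y) \<in> R" "a = x" using Cons.IH Cons.prems by (auto simp: walk_Cons2)
    moreover have "walk (R\<inverse>) [y,x] y x" using calculation by (simp add: walk_Cons2)
    ultimately have "walk (R\<inverse>) (rev p @ tl [y,x]) b x" using walk_app by fastforce
    then show ?thesis using Cons \<open>a = x\<close> by simp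
  qed
qed

lemma wl_single[simp]: "walk_len w [a] = 0" by (simp add: walk_len_def)
lemma wl_Cons2[simp]: "walk_len w (a#b#r) = w a b + walk_len w (b#r)" by (simp add: walk_len_def)

lemma wl_app: "p \<noteq> [] \<Longrightarrow> q \<noteq> [] \<Longrightarrow> last p = hd q \<Longrightarrow> walk_len w (p @ tl q) = walk_len w p + walk_len w q"
proof (induction p)
  case Nil then show ?case by simp
next
  case (Cons x p)
  show ?case
  proof (cases p)
    case Nil
    then have "[x] @ tl q = q" using Cons.prems by (metis append_Cons append_Nil last_ConsL list.collapse)
    then show ?thesis using Nil by simp
  next
    case (Cons y r)
    then show ?thesis using Cons.IH Cons.prems by simp
  qed
qed

lemma wl_nonneg: "(\<And>u v. (u,v)\<in>E \<Longrightarrow> w u v > 0) \<Longrightarrow> walk E p a b \<Longrightarrow> walk_len w p \<ge> 0"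
proof (induction p arbitrary: a)
  case Nil then show ?case by simp
next
  case (Cons x p)
  show ?case
  proof (cases p)
    case Nil then show ?thesis by simp
  next
    case (Cons y r)
    then show ?thesis using Cons.IH[of y] Cons.prems by (force simp: walk_Cons2 intro: add_nonneg_nonneg less_imp_le)
  qed
qed



lemma walk_split: "walk R p0 r x \<Longrightarrow> z \<in> set p0 \<Longrightarrow> \<exists>q. walk R q r z \<and> (\<exists>sg. walk R sg z x)"
proof -
  assume p0: "walk R p0 r x" and z: "z \<in> set p0"
  have "\<exists>i. i < length p0 \<and> p0 ! i = z" using z by (simp add: in_set_conv_nth)
  then obtain i where "i < length p0" "p0 ! i = z" by blast
  then show ?thesis using walk_take[of R p0 r x i] walk_drop[of R p0 r x i] p0 by blast
qed

lemma dom_gen: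
  fixes f :: "'a \<Rightarrow> real"
  assumes mono: "\<And>a b. (a,b) \<in> R \<Longrightarrow> f a < f b"
    and p0: "walk R p0 r x" and xr: "x \<noteq> r"
    and dm: "\<And>v z. dm v z \<longleftrightarrow> v \<noteq> z \<and> (\<forall>p. walk R p r z \<longrightarrow> v \<in> set p)"
  shows "dm (THE v. dm v x \<and> (\<forall>u. dm u x \<and> u \<noteq> v \<longrightarrow> dm u v)) x"
proof -
  have mono': "f a < f b" if "(a,b) \<in> R\<^sup>+" for a b
    using that by induction (auto dest: mono)
  have dmD: "v \<in> set p" if "dm v z" "walk R p r z" for v z p
    using that dm by simp
  have dmne: "v \<noteq> z" if "dm v z" for v z
    using that dm by simp
  have dmI: "dm v z" if "v \<noteq> z" "\<And>p. walk R p r z \<Longrightarrow> v \<in> set p" for v z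
    using that dm by simp
  define A where "A = {v. dm v x}"
  have rA: "r \<in> A" unfolding A_def mem_Collect_eq
  proof (rule dmI)
    show "r \<noteq> x" using xr by simp
    fix p assume "walk R p r x"
    then have "p \<noteq> []" "hd p = r" unfolding walk_def by auto
    then show "r \<in> set p" by (metis hd_in_set)
  qed
  have Asub: "A \<subseteq> set p0" unfolding A_def using p0 dmD by blast
  then have finA: "finite A" by (rule finite_subset) simp
  have "Max (f ` A) \<in> f ` A" using finA rA by (intro Max_in) auto
  then obtain v where vA: "v \<in> A" and vM: "f v = Max (f ` A)" by auto
  have vmax: "f u \<le> f v" if "u \<in> A" for u
    unfolding vM using finA that by simp
  define Q where "Q v \<longleftrightarrow> dm v x \<and> (\<forall>u. dm u x \<and> u \<noteq> v \<longrightarrow> dm u v)" for v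
  have prefix: "\<exists>q. walk R q r z \<and> (\<exists>sg. walk R sg z x)" if "z \<in> set p0" for z
    using walk_split[OF p0 that] by blast
  have Qv: "Q v"
    unfolding Q_def
  proof (intro conjI allI impI)
    show "dm v x" using vA unfolding A_def by simp
    fix u assume u: "dm u x \<and> u \<noteq> v"
    show "dm u v"
    proof (rule dmI)
      show "u \<noteq> v" using u by simp
      fix q assume q: "walk R q r v"
      have "v \<in> set p0" using vA Asub by blast
      then obtain sg where sg: "walk R sg v x" using prefix by blast
      have "walk R (q @ tl sg) r x" using walk_app[OF q sg] .
      then have "u \<in> set (q @ tl sg)" using u dmD by blast
      moreover have "u \<notin> set (tl sg)"
      proof
        assume "u \<in> set (tl sg)"
        then have "(v,u) \<in> R\<^sup>+" using walk_tl_trancl[OF sg] by simp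
        then have "f v < f u" using mono' by simp
        moreover have "u \<in> A" using u unfolding A_def by simp
        ultimately show False using vmax by fastforce
      qed
      ultimately show "u \<in> set q" by simp
    qed
  qed
  have lt: "f a < f b" if "Q a" "Q b" "a \<noteq> b" for a b
  proof -
    have dab: "dm a b" and db: "dm b x" using that unfolding Q_def by auto
    have "b \<in> set p0" using dmD[OF db p0] .
    then obtain q where q: "walk R q r b" using prefix by blast
    then have "a \<in> set q" using dmD[OF dab] by simp
    then have "a = b \<or> (a,b) \<in> R\<^sup>+" using walk_set_to[OF q] by simp
    then have "(a,b) \<in> R\<^sup>+" using that(3) by simp
    then show ?thesis using mono' by simp
  qed
  have uniq: "v1 = v2" if "Q v1" "Q v2" for v1 v2
  proof (rule ccontr)
    assume ne: "v1 \<noteq> v2"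
    have "f v1 < f v2" using lt[OF that ne] .
    moreover have "f v2 < f v1" using lt[OF that(2,1)] ne by simp
    ultimately show False by simp
  qed
  have "Q (THE v. Q v)" by (rule theI[of Q v, OF Qv]) (rule uniq, assumption, rule Qv)
  then show ?thesis unfolding Q_def by simp
qed

locale gr =
  fixes E :: "('a \<times> 'a) set" and w :: "'a \<Rightarrow> 'a \<Rightarrow> real" and s t :: 'a
  assumes pos: "\<And>u v. (u,v) \<in> E \<Longrightarrow> w u v > 0"
begin

lemma dist_le: "walk E p a b \<Longrightarrow> dist_G E w a b \<le> walk_len w p"
  unfolding dist_G_def
  by (rule cInf_lower) (auto intro!: bdd_belowI[of _ 0] wl_nonneg[OF pos])

lemma dist_ge: "walk E p a b \<Longrightarrow> (\<And>q. walk E q a b \<Longrightarrow> c \<le> walk_len w q) \<Longrightarrow> c \<le> dist_G E w a b"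
  unfolding dist_G_def by (rule cInf_greatest) auto

lemma tri: assumes "walk E p a b" "walk E q b c"
  shows "dist_G E w a c \<le> dist_G E w a b + dist_G E w b c"
proof -
  have "dist_G E w a c - walk_len w q' \<le> dist_G E w a b" if q': "walk E q' b c" for q'
  proof -
    have "dist_G E w a c - walk_len w q' \<le> walk_len w p'" if p': "walk E p' a b" for p'
    proof -
      have "dist_G E w a c \<le> walk_len w (p' @ tl q')" using dist_le walk_app[OF p' q'] by blast
      also have "\<dots> = walk_len w p' + walk_len w q'" using p' q' by (intro wl_app) (auto simp: walk_def)
      finally show ?thesis by simp
    qed
    then show ?thesis using dist_ge assms(1) by blast
  qed
  then have "dist_G E w a c - dist_G E w a b \<le> dist_G E w b c" using dist_ge[OF assms(2)]
    by (smt (verit))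
  then show ?thesis by simp
qed

abbreviation "D \<equiv> Darc E w s t"
abbreviation "ds \<equiv> dist_G E w s"

lemma sp_walkD: "shortest_st E w s t p \<Longrightarrow> walk D p s t"
  unfolding shortest_st_def walk_def Darc_def by blast

lemma sp_pos: assumes p: "shortest_st E w s t p" and i: "i < length p"
  shows "ds (p!i) = walk_len w (take (Suc i) p) \<and> dist_G E w (p!i) t = walk_len w (drop i p)"
proof -
  have wp: "walk E p s t" and lp: "walk_len w p = ds t" using p unfolding shortest_st_def by auto
  have wA: "walk E (take (Suc i) p) s (p!i)" using walk_take[OF wp i] .
  have wB: "walk E (drop i p) (p!i) t" using walk_drop[OF wp i] .
  have "walk_len w (take (Suc i) p) + walk_len w (drop i p) = walk_len w p"
    using wl_app[of "take (Suc i) p" "drop i p" w] take_drop_app[OF i] wA wB by (auto simp: walk_def)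
  moreover have "ds t \<le> ds (p!i) + dist_G E w (p!i) t" using tri[OF wA wB] .
  moreover have "ds (p!i) \<le> walk_len w (take (Suc i) p)" using dist_le[OF wA] .
  moreover have "dist_G E w (p!i) t \<le> walk_len w (drop i p)" using dist_le[OF wB] .
  ultimately show ?thesis using lp by linarith
qed

lemma DV_props: assumes "x \<in> DV E w s t"
  shows "(\<exists>q. walk D q s x) \<and> (\<exists>q. walk D q x t) \<and> (\<exists>q. walk E q s x) \<and> (\<exists>q. walk E q x t)
     \<and> ds x \<ge> 0 \<and> ds x + dist_G E w x t = ds t \<and> dist_G E w x t \<ge> 0"
proof -
  obtain p i where p: "shortest_st E w s t p" and i: "i < length p" "p!i = x"
    using assms unfolding DV_def by (auto simp: in_set_conv_nth)
  have wp: "walk E p s t" and lp: "walk_len w p = ds t" using p unfolding shortest_st_def by auto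
  have wd: "walk D p s t" using sp_walkD[OF p] .
  have wA: "walk E (take (Suc i) p) s (p!i)" using walk_take[OF wp i(1)] .
  have wB: "walk E (drop i p) (p!i) t" using walk_drop[OF wp i(1)] .
  have "walk_len w (take (Suc i) p) + walk_len w (drop i p) = walk_len w p"
    using wl_app[of "take (Suc i) p" "drop i p" w] take_drop_app[OF i(1)] wA wB by (auto simp: walk_def)
  moreover have "walk_len w (take (Suc i) p) \<ge> 0" "walk_len w (drop i p) \<ge> 0"
    using wl_nonneg[OF pos wA] wl_nonneg[OF pos wB] by auto
  ultimately show ?thesis using sp_pos[OF p i(1)] i(2) lp wA wB walk_take[OF wd i(1)] walk_drop[OF wd i(1)]
    by auto
qed

lemma arc: assumes "(a,b) \<in> D"
  shows "(a,b) \<in> E \<and> a \<in> DV E w s t \<and> b \<in> DV E w s t \<and> ds b = ds a + w a b"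
proof -
  obtain p i where p: "shortest_st E w s t p" and i: "Suc i < length p" "p!i = a" "p ! Suc i = b"
    using assms unfolding Darc_def by auto
  have wp: "walk E p s t" using p unfolding shortest_st_def by auto
  have E: "(a,b) \<in> E" using wp i unfolding walk_def by auto
  have DV: "a \<in> DV E w s t" "b \<in> DV E w s t" unfolding DV_def using p i
    by (auto intro!: exI[of _ p] nth_mem)
  have tk: "take (Suc (Suc i)) p = take (Suc i) p @ tl [a,b]"
    using i by (simp add: take_Suc_conv_app_nth)
  have "walk_len w (take (Suc (Suc i)) p) = walk_len w (take (Suc i) p) + walk_len w [a,b]"
    unfolding tk using i by (intro wl_app) (auto simp: take_Suc_conv_app_nth)
  then have "ds b = ds a + w a b" using sp_pos[OF p, of i] sp_pos[OF p, of "Suc i"] i by simp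
  then show ?thesis using E DV by simp
qed

lemma trancl_props: assumes "(a,b) \<in> D\<^sup>+"
  shows "ds a < ds b \<and> (\<exists>q. walk E q a b \<and> walk_len w q = ds b - ds a) \<and> a \<in> DV E w s t \<and> b \<in> DV E w s t"
  using assms
proof (induction rule: trancl_induct)
  case (base y)
  then show ?case using arc[OF base] pos[of a y] by (auto simp: walk_Cons2 intro!: exI[of _ "[a,y]"])
next
  case (step y z)
  then obtain q where q: "walk E q a y" "walk_len w q = ds y - ds a" by blast
  have yz: "(y,z) \<in> E" "ds z = ds y + w y z" "z \<in> DV E w s t" using arc[OF step(2)] by auto
  have wyz: "walk E [y,z] y z" using yz by (simp add: walk_Cons2)
  have "walk E (q @ tl [y,z]) a z" using walk_app[OF q(1) wyz] .
  moreover have "walk_len w (q @ tl [y,z]) = walk_len w q + walk_len w [y,z]"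
    using q(1) by (intro wl_app) (auto simp: walk_def)
  ultimately show ?case using step yz q pos[of y z] by (auto intro!: exI[of _ "q @ tl [y,z]"])
qed

lemma dist_trancl: assumes "(a,b) \<in> D\<^sup>+" shows "dist_G E w a b = ds b - ds a"
proof -
  obtain q where q: "walk E q a b" "walk_len w q = ds b - ds a" and aDV: "a \<in> DV E w s t"
    using trancl_props[OF assms] by blast
  obtain r where r: "walk E r s a" using DV_props[OF aDV] by blast
  show ?thesis using dist_le[OF q(1)] q(2) tri[OF r q(1)] by linarith
qed

end


context gr begin

lemma mono_arc: "(a,b) \<in> Darc E w s t \<Longrightarrow> ds a < ds b"
  using arc[of a b] pos[of a b] by auto

lemma Is_prop: assumes "x \<in> DV E w s t" "x \<noteq> s"
  shows "sdom E w s t (Is E w s t x) x"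
proof -
  obtain q where q: "walk (Darc E w s t) q s x" using DV_props[OF assms(1)] by blast
  show ?thesis unfolding Is_def
    by (rule dom_gen[of "Darc E w s t" ds q s x "sdom E w s t"])
       (auto simp: sdom_def dpath_def mono_arc q assms(2))
qed

lemma walk_conv: "walk ((Darc E w s t)\<inverse>) p a b \<longleftrightarrow> walk (Darc E w s t) (rev p) b a"
  using walk_rev[of "Darc E w s t" "rev p" b a] walk_rev[of "(Darc E w s t)\<inverse>" p a b] by auto

lemma It_prop: assumes "x \<in> DV E w s t" "x \<noteq> t"
  shows "tdom E w s t (It E w s t x) x"
proof -
  obtain q where q: "walk (Darc E w s t) q x t" using DV_props[OF assms(1)] by blast
  have rq: "walk ((Darc E w s t)\<inverse>) (rev q) t x" using walk_rev[OF q] .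
  have eq: "tdom E w s t v z \<longleftrightarrow> v \<noteq> z \<and> (\<forall>p. walk ((Darc E w s t)\<inverse>) p t z \<longrightarrow> v \<in> set p)" for v z
    unfolding tdom_def dpath_def walk_conv
    by (metis set_rev rev_rev_ident)
  show ?thesis unfolding It_def
    by (rule dom_gen[of "(Darc E w s t)\<inverse>" "\<lambda>v. - ds v" "rev q" t x "tdom E w s t"])
       (auto simp: eq mono_arc rq assms(2))
qed

end



theorem lemma9:
  fixes V :: "'a set" and E :: "('a \<times> 'a) set" and w :: "'a \<Rightarrow> 'a \<Rightarrow> real"
    and s t y vi vj :: 'a
  assumes "finite V"
    and "E \<subseteq> V \<times> V"
    and "sym E"
    and "\<forall>v. (v, v) \<notin> E"
    and "\<forall>u v. (u, v) \<in> E \<longrightarrow> w u v > 0 \<and> w u v = w v u"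
    and "\<forall>u\<in>V. \<forall>v\<in>V. \<exists>p. walk E p u v"
    and "s \<in> V" and "t \<in> V"
    and "y \<in> DV E w s t"
    and "prec E w s t y vj" and "prec E w s t y vi"
    and "dist_G E w s vj \<le> dist_G E w s vi"
    and "gstar E w s t vj \<noteq> \<infinity>"
  shows "(INF u \<in> {u. prec E w s t u y}. gfun E w s t vi u) \<ge> gstar E w s t vj"
proof -
  interpret gr E w s t using assms(5) by unfold_locales blast
  let ?D = "Darc E w s t"
  let ?ds = "dist_G E w s"
  have yvj: "(y,vj) \<in> ?D\<^sup>+" and yvi: "(y,vi) \<in> ?D\<^sup>+" using assms(10,11) by (auto simp: prec_def)
  have vjDV: "vj \<in> DV E w s t" and vjy: "?ds y < ?ds vj" using trancl_props[OF yvj] by auto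
  have viDV: "vi \<in> DV E w s t" using trancl_props[OF yvi] by auto
  have y0: "?ds y \<ge> 0" and yt: "?ds y \<le> ?ds t" using DV_props[OF assms(9)] by auto
  have s0: "?ds s \<le> 0" using dist_le[of "[s]" s s] by simp
  have vjs: "vj \<noteq> s" using vjy y0 s0 by auto
  have IsP: "sdom E w s t (Is E w s t vj) vj" using Is_prop[OF vjDV vjs] .
  have gstar_le: "gstar E w s t vj \<le> gfun E w s t vj z" if "z \<in> DV E w s t" for z
    unfolding gstar_def using that by (rule INF_lower)
  show ?thesis
  proof (rule INF_greatest)
    fix u assume "u \<in> {u. prec E w s t u y}"
    then have uy: "(u,y) \<in> ?D\<^sup>+" by (simp add: prec_def)
    show "gstar E w s t vj \<le> gfun E w s t vi u"
    proof (cases "gfun E w s t vi u = \<infinity>")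
      case True then show ?thesis by simp
    next
      case False
      then have viIt: "(vi, It E w s t u) \<in> ?D\<^sup>+"
        and gv: "gfun E w s t vi u = ereal (dist_G E w u vi)"
        by (auto simp: gfun_def prec_def split: if_splits)
      have uvj: "(u,vj) \<in> ?D\<^sup>+" using uy yvj by simp
      have uvi: "(u,vi) \<in> ?D\<^sup>+" using uy yvi by simp
      have uDV: "u \<in> DV E w s t" and uy': "?ds u < ?ds y" using trancl_props[OF uy] by auto
      have duvi: "dist_G E w u vi = ?ds vi - ?ds u" using dist_trancl[OF uvi] .
      have duvj: "dist_G E w u vj = ?ds vj - ?ds u" using dist_trancl[OF uvj] .
      have ut: "u \<noteq> t" using uy' yt by auto
      have ItP: "tdom E w s t (It E w s t u) u" using It_prop[OF uDV ut] .
      obtain q1 where q1: "walk ?D q1 u vj" using walk_trancl[OF uvj] by blast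
      obtain r1 where r1: "walk ?D r1 vj t" using DV_props[OF vjDV] by blast
      have "It E w s t u \<in> set (q1 @ tl r1)"
        using ItP walk_app[OF q1 r1] unfolding tdom_def dpath_def by blast
      have ltIt: "?ds vi < ?ds (It E w s t u)" using trancl_props[OF viIt] by simp
      have vjIt: "(vj, It E w s t u) \<in> ?D\<^sup>+"
      proof (cases "It E w s t u \<in> set q1")
        case True
        then have "It E w s t u = vj \<or> (It E w s t u, vj) \<in> ?D\<^sup>+" using walk_set_to[OF q1] by simp
        then have "?ds (It E w s t u) \<le> ?ds vj" using trancl_props[of "It E w s t u" vj] by force
        then show ?thesis using ltIt assms(12) by simp
      next
        case False
        then have "It E w s t u \<in> set (tl r1)" using \<open>It E w s t u \<in> set (q1 @ tl r1)\<close> by simp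
        then show ?thesis using walk_tl_trancl[OF r1] by simp
      qed
      obtain ps where ps: "walk ?D ps s u" using DV_props[OF uDV] by blast
      have IsIn: "Is E w s t vj \<in> set (ps @ tl q1)"
        using IsP walk_app[OF ps q1] unfolding sdom_def dpath_def by blast
      show ?thesis
      proof (cases "(Is E w s t vj, u) \<in> ?D\<^sup>+")
        case True
        then have "u \<in> Cset E w s t vj" using uvj by (simp add: Cset_def prec_def)
        then have "gfun E w s t vj u = ereal (dist_G E w u vj)"
          using vjIt by (simp add: gfun_def prec_def)
        moreover have "dist_G E w u vj \<le> dist_G E w u vi" using duvi duvj assms(12) by simp
        ultimately show ?thesis using gstar_le[OF uDV] gv by (metis ereal_less_eq(3) order_trans)
      next
        case False
        have dsIs: "?ds u \<le> ?ds (Is E w s t vj)"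
        proof (cases "Is E w s t vj \<in> set ps")
          case True
          then have "Is E w s t vj = u \<or> (Is E w s t vj, u) \<in> ?D\<^sup>+" using walk_set_to[OF ps] by simp
          then show ?thesis using False by simp
        next
          case False
          then have "Is E w s t vj \<in> set (tl q1)" using IsIn by simp
          then have "(u, Is E w s t vj) \<in> ?D\<^sup>+" using walk_tl_trancl[OF q1] by simp
          then show ?thesis using trancl_props by force
        qed
        obtain y' where y'DV: "y' \<in> DV E w s t" and gy': "gfun E w s t vj y' \<noteq> \<infinity>"
        proof (rule ccontr)
          assume "\<not> thesis"
          then have "\<forall>z \<in> DV E w s t. gfun E w s t vj z = \<infinity>" using that by blast
          then have "\<infinity> \<le> gstar E w s t vj" unfolding gstar_def by (intro INF_greatest) simp
          then show False using assms(13) by simp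
        qed
        then have y'C: "y' \<in> Cset E w s t vj" and gy'v: "gfun E w s t vj y' = ereal (dist_G E w y' vj)"
          by (auto simp: gfun_def split: if_splits)
        have Isy': "(Is E w s t vj, y') \<in> ?D\<^sup>+" and y'vj: "(y', vj) \<in> ?D\<^sup>+"
          using y'C by (auto simp: Cset_def prec_def)
        have "?ds (Is E w s t vj) < ?ds y'" using trancl_props[OF Isy'] by simp
        moreover have "dist_G E w y' vj = ?ds vj - ?ds y'" using dist_trancl[OF y'vj] .
        ultimately have "dist_G E w y' vj \<le> dist_G E w u vi" using duvi dsIs assms(12) by simp
        then show ?thesis using gstar_le[OF y'DV] gy'v gv by (metis ereal_less_eq(3) order_trans)
      qed
    qed
  qed
qed


end
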